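(* Let $r\ge1$ be an integer, $P\in\Pi_r^d$, $\mathbf{x}\in\mathbb{S}^d$, $\delta\in(0,2]$. Then $$\|P\|_\infty\le\left(\frac4\delta\right)^{2r}\|P\|_{\infty,\mathbb{B}(\mathbf{x},\delta)}.$$
   Context: $\mathbb{S}^d$ is the unit sphere of $\mathbb{R}^{d+1}$, $\mathbb{B}(\mathbf{x},\delta)=\{\mathbf{y}\in\mathbb{S}^d:|\mathbf{x}-\mathbf{y}|_{d+1}\le\delta\}$ with $|\cdot|_{d+1}$ the Euclidean norm; $\Pi_r^d$ is the space of restrictions to $\mathbb{S}^d$ of algebraic polynomials in $d+1$ variables of total degree $<r$; $\|P\|_\infty=\sup_{\mathbb{S}^d}|P|$ and $\|P\|_{\infty,B}=\sup_B|P|$. *)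

theory Defs
  imports "HOL-Analysis.Analysis"
begin

text \<open>Real polynomials in the coordinates of \<open>real^'n\<close> (here \<open>CARD('n) = d+1\<close>)
  of total degree \<open>< r\<close>, written out as finite sums of monomials.
  The space \<open>\<Pi>_r^d\<close> consists of the restrictions of such functions to the unit sphere.\<close>
definition poly_deg_lt :: "nat \<Rightarrow> (real^'n \<Rightarrow> real) \<Rightarrow> bool" where
  "poly_deg_lt r P \<longleftrightarrow>
     (\<exists>c :: ('n \<Rightarrow> nat) \<Rightarrow> real.
        finite {\<alpha>. c \<alpha> \<noteq> 0} \<and>
        (\<forall>\<alpha>. c \<alpha> \<noteq> 0 \<longrightarrow> (\<Sum>i\<in>UNIV. \<alpha> i) < r) \<and>
        (\<forall>x. P x = (\<Sum>\<alpha>\<in>{\<alpha>. c \<alpha> \<noteq> 0}. c \<alpha> * (\<Prod>i\<in>UNIV. (x $ i) ^ \<alpha> i))))"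

definition sph_cap :: "real^'n \<Rightarrow> real \<Rightarrow> (real^'n) set" where
  "sph_cap x \<delta> = {y \<in> sphere 0 1. norm (x - y) \<le> \<delta>}"

end

theory Submission
  imports Defs "HOL-Computational_Algebra.Polynomial"
begin

fun cheb :: "nat \<Rightarrow> real poly" where
  "cheb 0 = 1"
| "cheb (Suc 0) = [:0, 1:]"
| "cheb (Suc (Suc k)) = [:0, 2:] * cheb (Suc k) - cheb k"

lemma cheb_degree: "degree (cheb k) \<le> k"
proof (induction k rule: cheb.induct)
  case 1 then show ?case by simp
next
  case 2 then show ?case by simp
next
  case (3 k)
  have "degree ([:0, 2:] * cheb (Suc k)) \<le> Suc (Suc k)"
    by (rule order.trans[OF degree_mult_le]) (use 3 in simp)
  moreover have "degree (cheb k) \<le> Suc (Suc k)" using 3 by simp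
  ultimately show ?case by (simp add: degree_diff_le)
qed

lemma cheb_cos: "poly (cheb k) (cos t) = cos (real k * t)"
proof (induction k rule: cheb.induct)
  case 1 then show ?case by simp
next
  case 2 then show ?case by simp
next
  case (3 k)
  have e: "cos ((real k + 2) * t) = 2 * cos t * cos ((real k + 1) * t) - cos (real k * t)"
  proof -
    have a: "(real k + 2) * t = (real k + 1) * t + t" by algebra
    have b: "real k * t = (real k + 1) * t - t" by algebra
    show ?thesis unfolding a b cos_add cos_diff by simp
  qed
  show ?case using 3 e by (simp add: algebra_simps)
qed

lemma cheb_big:
  assumes "y \<ge> 1"
  defines "l \<equiv> y + sqrt (y^2 - 1)" and "m \<equiv> y - sqrt (y^2 - 1)"
  shows "poly (cheb k) y = (l ^ k + m ^ k) / 2"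
proof -
  have y1: "y^2 \<ge> 1" using assms(1) by (rule one_le_power)
  have s: "sqrt (y^2 - 1) ^ 2 = y^2 - 1" using y1 by (intro real_sqrt_pow2) simp
  have lm: "l * m = 1" unfolding l_def m_def using s by (simp add: algebra_simps power2_eq_square)
  have lpm: "l + m = 2 * y" unfolding l_def m_def by simp
  show ?thesis
  proof (induction k rule: cheb.induct)
    case 1 then show ?case by simp
  next
    case 2 then show ?case using lpm by simp
  next
    case (3 k)
    have "poly (cheb (Suc (Suc k))) y = 2 * y * poly (cheb (Suc k)) y - poly (cheb k) y"
      by simp
    also have "\<dots> = (l + m) * ((l ^ Suc k + m ^ Suc k) / 2) - (l ^ k + m ^ k) / 2"
      by (simp only: 3 lpm[symmetric])
    also have "\<dots> = (l ^ Suc (Suc k) + m ^ Suc (Suc k)) / 2 + ((l * m) * (l ^ k + m ^ k) - (l ^ k + m ^ k)) / 2"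
      by (simp add: field_simps)
    also have "\<dots> = (l ^ Suc (Suc k) + m ^ Suc (Suc k)) / 2" using lm by simp
    finally show ?case .
  qed
qed

lemma cheb_bound:
  assumes "y \<ge> 1"
  shows "poly (cheb k) y \<le> (2 * y) ^ k"
proof -
  define l where "l = y + sqrt (y^2 - 1)"
  define m where "m = y - sqrt (y^2 - 1)"
  have s0: "sqrt (y^2 - 1) \<ge> 0" using assms by simp
  have s1: "sqrt (y^2 - 1) \<le> y"
    using assms by (intro real_sqrt_le_iff[THEN iffD2, of _ "y^2", simplified, THEN order.trans]) auto
  have m0: "0 \<le> m" unfolding m_def using s1 by simp
  have ml: "m \<le> l" unfolding m_def l_def using s0 by simp
  have l2: "l \<le> 2 * y" unfolding l_def using s1 by simp
  have "m ^ k \<le> l ^ k" using ml m0 by (rule power_mono)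
  then have "(l ^ k + m ^ k) / 2 \<le> l ^ k" by simp
  also have "\<dots> \<le> (2 * y) ^ k" using m0 ml l2 by (intro power_mono) auto
  finally have c: "(l ^ k + m ^ k) / 2 \<le> (2 * y) ^ k" .
  show ?thesis using c unfolding l_def m_def cheb_big[OF assms] .
qed

lemma interp:
  fixes p :: "real poly" and \<eta> :: "nat \<Rightarrow> real"
  assumes inj: "inj_on \<eta> {..m}" and deg: "degree p \<le> m"
  shows "poly p y = (\<Sum>j\<le>m. poly p (\<eta> j) * (\<Prod>i\<in>{..m}-{j}. (y - \<eta> i) / (\<eta> j - \<eta> i)))"
proof -
  define L where "L = (\<Sum>j\<le>m. smult (poly p (\<eta> j) / (\<Prod>i\<in>{..m}-{j}. (\<eta> j - \<eta> i)))
                     (\<Prod>i\<in>{..m}-{j}. [:- \<eta> i, 1:]))"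
  have polyL: "poly L z = (\<Sum>j\<le>m. poly p (\<eta> j) * (\<Prod>i\<in>{..m}-{j}. (z - \<eta> i) / (\<eta> j - \<eta> i)))" for z
    unfolding L_def poly_sum poly_smult poly_prod
    by (intro sum.cong refl) (simp add: prod_dividef)
  have degL: "degree L \<le> m"
    unfolding L_def
  proof (intro degree_sum_le)
    fix j assume j: "j \<in> {..m}"
    have "degree (\<Prod>i\<in>{..m}-{j}. [:- \<eta> i, 1:]) \<le> (\<Sum>i\<in>{..m}-{j}. (degree \<circ> (\<lambda>i. [:- \<eta> i, 1:])) i)"
      by (rule degree_prod_sum_le) simp
    also have "\<dots> = card ({..m}-{j})" by simp
    also have "\<dots> = m" using j by simp
    finally show "degree (smult (poly p (\<eta> j) / (\<Prod>i\<in>{..m}-{j}. (\<eta> j - \<eta> i)))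
                     (\<Prod>i\<in>{..m}-{j}. [:- \<eta> i, 1:])) \<le> m"
      by (rule order.trans[OF degree_smult_le])
  qed simp
  have agree: "poly p z = poly L z" if z: "z \<in> \<eta> ` {..m}" for z
  proof -
    obtain k where k: "k \<le> m" "z = \<eta> k" using z by auto
    have t: "poly p (\<eta> j) * (\<Prod>i\<in>{..m}-{j}. (\<eta> k - \<eta> i) / (\<eta> j - \<eta> i))
           = (if j = k then poly p (\<eta> k) else 0)" if j: "j \<le> m" for j
    proof (cases "j = k")
      case True
      have "(\<Prod>i\<in>{..m}-{j}. (\<eta> k - \<eta> i) / (\<eta> j - \<eta> i)) = 1"
        using True inj j by (intro prod.neutral) (auto simp: inj_on_def)
      then show ?thesis using True by simp
    next
      case False
      have "(\<Prod>i\<in>{..m}-{j}. (\<eta> k - \<eta> i) / (\<eta> j - \<eta> i)) = 0"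
        using False k by (intro prod_zero) auto
      then show ?thesis using False by simp
    qed
    show ?thesis unfolding polyL k(2) using k(1) by (simp add: t)
  qed
  have "p = L"
  proof (rule poly_eqI_degree[OF agree])
    have "card (\<eta> ` {..m}) = Suc m" using inj by (simp add: card_image)
    then show "degree p < card (\<eta> ` {..m})" "degree L < card (\<eta> ` {..m})"
      using deg degL by auto
  qed
  then show ?thesis by (subst (1) \<open>p = L\<close>) (rule polyL)
qed

lemma cheb_ineq:
  fixes p :: "real poly"
  assumes deg: "degree p \<le> m" and bnd: "\<And>t. -1 \<le> t \<Longrightarrow> t \<le> 1 \<Longrightarrow> \<bar>poly p t\<bar> \<le> K"
    and y: "y \<ge> 1"
  shows "\<bar>poly p y\<bar> \<le> K * (2 * y) ^ m"
proof (cases "m = 0")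
  case True
  then have "degree p = 0" using deg by simp
  then obtain c where "p = [:c:]" by (meson degree_eq_zeroE)
  then show ?thesis using True bnd[of 1] by simp
next
  case False
  then have mpos: "real m > 0" by simp
  have K0: "K \<ge> 0" using bnd[of 1] by simp
  define \<eta> where "\<eta> j = cos (real j * pi / real m)" for j
  have dec: "\<eta> j < \<eta> i" if "i < j" "j \<le> m" for i j
  proof -
    have "real i * pi / real m < real j * pi / real m"
      using that mpos by (intro divide_strict_right_mono mult_strict_right_mono) auto
    moreover have "real j * pi / real m \<le> pi"
      using that mpos by (simp add: field_simps)
    ultimately show ?thesis unfolding \<eta>_def
      by (intro cos_monotone_0_pi) auto
  qed
  have inj: "inj_on \<eta> {..m}"
  proof (rule inj_onI)
    fix i j assume "i \<in> {..m}" "j \<in> {..m}" "\<eta> i = \<eta> j"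
    then show "i = j" using dec[of i j] dec[of j i] by (cases i j rule: linorder_cases) auto
  qed
  have le1: "\<eta> i \<le> 1" for i unfolding \<eta>_def by simp
  define lg where "lg j = (\<Prod>i\<in>{..m}-{j}. (y - \<eta> i) / (\<eta> j - \<eta> i))" for j
  have sgn: "(-1) ^ j * lg j \<ge> 0" if j: "j \<le> m" for j
  proof -
    define f where "f i = (y - \<eta> i) / (\<eta> j - \<eta> i)" for i
    have split: "{..m}-{j} = {..<j} \<union> {j<..m}" using j by auto
    have "lg j = prod f {..<j} * prod f {j<..m}"
      unfolding lg_def f_def[symmetric] split by (rule prod.union_disjoint) auto
    moreover have "prod f {..<j} = (-1) ^ j * (\<Prod>i<j. - f i)"
      by (simp add: prod_uminus)
    ultimately have e: "(-1) ^ j * lg j = (\<Prod>i<j. - f i) * prod f {j<..m}"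
      by (simp add: power_mult_distrib[symmetric] flip: power_add mult.assoc)
    have a: "(\<Prod>i<j. - f i) \<ge> 0"
    proof (intro prod_nonneg)
      fix i assume "i \<in> {..<j}"
      then have "\<eta> j < \<eta> i" using dec j by auto
      moreover have "y - \<eta> i \<ge> 0" using le1[of i] y by simp
      ultimately show "- f i \<ge> 0" unfolding f_def
        by (simp add: divide_nonneg_neg divide_nonpos_neg)
    qed
    have b: "prod f {j<..m} \<ge> 0"
    proof (intro prod_nonneg)
      fix i assume "i \<in> {j<..m}"
      then have "\<eta> i < \<eta> j" using dec by auto
      moreover have "y - \<eta> i \<ge> 0" using le1[of i] y by simp
      ultimately show "f i \<ge> 0" unfolding f_def by simp
    qed
    show ?thesis unfolding e using a b by simp
  qed
  have absl: "\<bar>lg j\<bar> = (-1) ^ j * lg j" if "j \<le> m" for j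
  proof -
    have "\<bar>lg j\<bar> = \<bar>(-1) ^ j * lg j\<bar>" by (simp add: abs_mult)
    then show ?thesis using sgn[OF that] by simp
  qed
  have chebeta: "poly (cheb m) (\<eta> j) = (-1) ^ j" for j
  proof -
    have "poly (cheb m) (\<eta> j) = cos (real m * (real j * pi / real m))"
      unfolding \<eta>_def by (rule cheb_cos)
    also have "real m * (real j * pi / real m) = real j * pi" using mpos by simp
    finally show ?thesis by simp
  qed
  have "\<bar>poly p y\<bar> = \<bar>\<Sum>j\<le>m. poly p (\<eta> j) * lg j\<bar>"
    unfolding lg_def by (subst interp[OF inj deg]) (rule refl)
  also have "\<dots> \<le> (\<Sum>j\<le>m. \<bar>poly p (\<eta> j) * lg j\<bar>)" by (rule sum_abs)
  also have "\<dots> \<le> (\<Sum>j\<le>m. K * ((-1) ^ j * lg j))"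
  proof (intro sum_mono)
    fix j assume j: "j \<in> {..m}"
    have "\<bar>poly p (\<eta> j)\<bar> \<le> K" using bnd le1 unfolding \<eta>_def by simp
    then show "\<bar>poly p (\<eta> j) * lg j\<bar> \<le> K * ((-1) ^ j * lg j)"
      using j absl[of j] by (simp add: abs_mult mult_right_mono)
  qed
  also have "\<dots> = K * poly (cheb m) y"
    unfolding sum_distrib_left[symmetric]
    by (subst interp[OF inj cheb_degree]) (simp add: chebeta lg_def)
  also have "\<dots> \<le> K * (2 * y) ^ m" using K0 cheb_bound[OF y] by (rule mult_left_mono[rotated])
  finally show ?thesis .
qed

definition rep :: "nat \<Rightarrow> (real \<Rightarrow> real \<Rightarrow> real) \<Rightarrow> bool" where
  "rep k f \<longleftrightarrow> (\<exists>A B. degree A \<le> k \<and> degree (pCons 0 B) \<le> k \<and>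
      (\<forall>a b. a^2 + b^2 = 1 \<longrightarrow> f a b = poly A a + b * poly B a))"

lemma rep_const: "rep 0 (\<lambda>a b. c)"
  unfolding rep_def by (intro exI[of _ "[:c:]"] exI[of _ 0]) simp

lemma rep_lin: "rep 1 (\<lambda>a b. a * p + b * q)"
  unfolding rep_def by (intro exI[of _ "[:0, p:]"] exI[of _ "[:q:]"]) (simp add: algebra_simps)

lemma rep_mono:
  assumes "rep k f" "k \<le> l" shows "rep l f"
proof -
  obtain A B where h: "degree A \<le> k" "degree (pCons 0 B) \<le> k"
      "\<forall>a b. a^2 + b^2 = 1 \<longrightarrow> f a b = poly A a + b * poly B a"
    using assms(1) unfolding rep_def by blast
  have "degree A \<le> l" "degree (pCons 0 B) \<le> l" using h(1,2) assms(2) by linarith+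
  then show ?thesis unfolding rep_def using h(3) by blast
qed

lemma rep_cong: "rep k f \<Longrightarrow> (\<And>a b. g a b = f a b) \<Longrightarrow> rep k g"
  unfolding rep_def by simp

lemma rep_add: "rep k f \<Longrightarrow> rep k g \<Longrightarrow> rep k (\<lambda>a b. f a b + g a b)"
proof -
  assume "rep k f" "rep k g"
  then obtain A1 B1 A2 B2 where h1: "degree A1 \<le> k" "degree (pCons 0 B1) \<le> k"
      "\<forall>a b. a^2 + b^2 = 1 \<longrightarrow> f a b = poly A1 a + b * poly B1 a"
    and h2: "degree A2 \<le> k" "degree (pCons 0 B2) \<le> k"
      "\<forall>a b. a^2 + b^2 = 1 \<longrightarrow> g a b = poly A2 a + b * poly B2 a"
    unfolding rep_def by blast
  have "degree (A1 + A2) \<le> k" using h1 h2 by (intro degree_add_le) auto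
  moreover have "degree (pCons 0 (B1 + B2)) \<le> k"
    using degree_add_le[OF h1(2) h2(2)] by simp
  moreover have "\<forall>a b. a^2 + b^2 = 1 \<longrightarrow> f a b + g a b = poly (A1 + A2) a + b * poly (B1 + B2) a"
    using h1(3) h2(3) by (simp add: algebra_simps)
  ultimately show ?thesis unfolding rep_def by blast
qed

lemma rep_mult: "rep k f \<Longrightarrow> rep l g \<Longrightarrow> rep (k + l) (\<lambda>a b. f a b * g a b)"
proof -
  assume "rep k f" "rep l g"
  then obtain A1 B1 A2 B2 where h1: "degree A1 \<le> k" "degree (pCons 0 B1) \<le> k"
      "\<forall>a b. a^2 + b^2 = 1 \<longrightarrow> f a b = poly A1 a + b * poly B1 a"
    and h2: "degree A2 \<le> l" "degree (pCons 0 B2) \<le> l"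
      "\<forall>a b. a^2 + b^2 = 1 \<longrightarrow> g a b = poly A2 a + b * poly B2 a"
    unfolding rep_def by blast
  define A where "A = A1 * A2 + [:1, 0, -1:] * (B1 * B2)"
  define B where "B = A1 * B2 + A2 * B1"
  have dA1: "degree (A1 * A2) \<le> k + l"
    using h1 h2 by (intro order.trans[OF degree_mult_le]) auto
  have dA2: "degree ([:1, 0, -1:] * (B1 * B2)) \<le> k + l"
  proof (cases "B1 = 0 \<or> B2 = 0")
    case True then show ?thesis by auto
  next
    case False
    then have "degree B1 + 1 \<le> k" "degree B2 + 1 \<le> l" using h1(2) h2(2) by auto
    moreover have "degree ([:1, 0, -1:] * (B1 * B2)) \<le> 2 + (degree B1 + degree B2)"
      by (intro order.trans[OF degree_mult_le] add_mono order.trans[OF degree_mult_le]) auto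
    ultimately show ?thesis by linarith
  qed
  have d1: "degree A \<le> k + l" unfolding A_def using dA1 dA2 by (intro degree_add_le)
  have d2: "degree (pCons 0 B) \<le> k + l"
  proof -
    have e: "pCons 0 B = A1 * pCons 0 B2 + A2 * pCons 0 B1" unfolding B_def by simp
    have x1: "degree (A1 * pCons 0 B2) \<le> k + l"
      using h1 h2 by (intro order.trans[OF degree_mult_le]) auto
    have x2: "degree (A2 * pCons 0 B1) \<le> k + l"
      using h1 h2 by (intro order.trans[OF degree_mult_le]) auto
    show ?thesis unfolding e by (rule degree_add_le[OF x1 x2])
  qed
  have d3: "\<forall>a b. a^2 + b^2 = 1 \<longrightarrow> f a b * g a b = poly A a + b * poly B a"
  proof (intro allI impI)
    fix a b :: real assume ab: "a^2 + b^2 = 1"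
    then have bb: "b * b = 1 - a * a" by (simp add: power2_eq_square algebra_simps)
    have "f a b * g a b = (poly A1 a + b * poly B1 a) * (poly A2 a + b * poly B2 a)"
      using h1(3) h2(3) ab by simp
    also have "\<dots> = poly A1 a * poly A2 a + (b * b) * (poly B1 a * poly B2 a)
        + b * (poly A1 a * poly B2 a + poly A2 a * poly B1 a)" by (simp add: algebra_simps)
    also have "\<dots> = poly A a + b * poly B a" unfolding A_def B_def bb by (simp add: algebra_simps)
    finally show "f a b * g a b = poly A a + b * poly B a" .
  qed
  show ?thesis unfolding rep_def by (rule exI[of _ A], rule exI[of _ B]) (intro conjI d1 d2 d3)
qed

lemma rep_pow: "rep k f \<Longrightarrow> rep (j * k) (\<lambda>a b. f a b ^ j)"
proof (induction j)
  case 0 then show ?case using rep_const[of 1] by simp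
next
  case (Suc j)
  then have "rep (k + j * k) (\<lambda>a b. f a b * f a b ^ j)" by (intro rep_mult) auto
  then show ?case by simp
qed

lemma rep_prod:
  "finite I \<Longrightarrow> (\<And>i. i \<in> I \<Longrightarrow> rep (k i) (f i)) \<Longrightarrow> rep (\<Sum>i\<in>I. k i) (\<lambda>a b. \<Prod>i\<in>I. f i a b)"
proof (induction I rule: finite_induct)
  case empty then show ?case using rep_const[of 1] by simp
next
  case (insert x F)
  then have "rep (k x + (\<Sum>i\<in>F. k i)) (\<lambda>a b. f x a b * (\<Prod>i\<in>F. f i a b))"
    by (intro rep_mult) auto
  then show ?case using insert by simp
qed

lemma rep_sum:
  "finite I \<Longrightarrow> (\<And>i. i \<in> I \<Longrightarrow> rep k (f i)) \<Longrightarrow> rep k (\<lambda>a b. \<Sum>i\<in>I. f i a b)"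
proof (induction I rule: finite_induct)
  case empty then show ?case using rep_mono[OF rep_const[of 0]] by simp
next
  case (insert x F)
  then have "rep k (\<lambda>a b. f x a b + (\<Sum>i\<in>F. f i a b))"
    by (intro rep_add) auto
  then show ?case using insert by simp
qed

lemma P_rep:
  fixes P :: "real^'n \<Rightarrow> real" and x u :: "real^'n"
  assumes "poly_deg_lt r P"
  shows "rep (r - 1) (\<lambda>a b. P (a *\<^sub>R x + b *\<^sub>R u))"
proof -
  obtain c :: "('n \<Rightarrow> nat) \<Rightarrow> real" where fin: "finite {\<alpha>. c \<alpha> \<noteq> 0}"
    and dg: "\<forall>\<alpha>. c \<alpha> \<noteq> 0 \<longrightarrow> (\<Sum>i\<in>UNIV. \<alpha> i) < r"
    and P: "\<forall>x. P x = (\<Sum>\<alpha>\<in>{\<alpha>. c \<alpha> \<noteq> 0}. c \<alpha> * (\<Prod>i\<in>UNIV. (x $ i) ^ \<alpha> i))"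
    using assms unfolding poly_deg_lt_def by blast
  have "rep (r - 1) (\<lambda>a b. \<Sum>\<alpha>\<in>{\<alpha>. c \<alpha> \<noteq> 0}. c \<alpha> * (\<Prod>i\<in>UNIV. (a * x $ i + b * u $ i) ^ \<alpha> i))"
  proof (intro rep_sum[OF fin])
    fix \<alpha> assume "\<alpha> \<in> {\<alpha>. c \<alpha> \<noteq> 0}"
    then have le: "(\<Sum>i\<in>UNIV. \<alpha> i) \<le> r - 1" using dg by force
    have "rep (\<Sum>i\<in>UNIV. \<alpha> i * 1) (\<lambda>a b. \<Prod>i\<in>UNIV. (a * x $ i + b * u $ i) ^ \<alpha> i)"
      by (intro rep_prod rep_pow rep_lin) simp
    then have "rep (0 + (\<Sum>i\<in>UNIV. \<alpha> i)) (\<lambda>a b. c \<alpha> * (\<Prod>i\<in>UNIV. (a * x $ i + b * u $ i) ^ \<alpha> i))"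
      by (intro rep_mult rep_const) simp
    then show "rep (r - 1) (\<lambda>a b. c \<alpha> * (\<Prod>i\<in>UNIV. (a * x $ i + b * u $ i) ^ \<alpha> i))"
      by (rule rep_mono) (use le in simp)
  qed
  then show ?thesis by (rule rep_cong) (simp add: P)
qed

lemma circ_facts:
  fixes x u :: "real^'n"
  assumes "norm x = 1" "norm u = 1" "x \<bullet> u = 0" "a^2 + b^2 = 1"
  shows "norm (a *\<^sub>R x + b *\<^sub>R u) = 1" "norm (x - (a *\<^sub>R x + b *\<^sub>R u)) ^ 2 = 2 - 2 * a"
proof -
  have xx: "x \<bullet> x = 1" using assms(1) by (simp add: dot_square_norm)
  have uu: "u \<bullet> u = 1" using assms(2) by (simp add: dot_square_norm)
  have ux: "u \<bullet> x = 0" using assms(3) by (simp add: inner_commute)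
  have "norm (a *\<^sub>R x + b *\<^sub>R u) ^ 2 = a^2 + b^2"
    unfolding power2_norm_eq_inner
    by (simp add: inner_add_left inner_add_right xx uu ux assms(3) power2_eq_square)
  then show "norm (a *\<^sub>R x + b *\<^sub>R u) = 1"
    using assms(4) power2_eq_1_iff[of "norm (a *\<^sub>R x + b *\<^sub>R u)"] norm_ge_zero[of "a *\<^sub>R x + b *\<^sub>R u"]
    by auto
  show "norm (x - (a *\<^sub>R x + b *\<^sub>R u)) ^ 2 = 2 - 2 * a"
    unfolding power2_norm_eq_inner
    using assms(4)
    by (simp add: inner_add_left inner_add_right inner_diff_left inner_diff_right xx uu ux assms(3)
        power2_eq_square algebra_simps)
qed

lemma circ_decomp:
  fixes x y :: "real^'n"
  assumes "CARD('n) \<ge> 2" "norm x = 1" "norm y = 1"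
  obtains u a b where "norm u = 1" "x \<bullet> u = 0" "a^2 + b^2 = 1" "y = a *\<^sub>R x + b *\<^sub>R u"
proof -
  have xx: "x \<bullet> x = 1" using assms(2) by (simp add: dot_square_norm)
  define a where "a = x \<bullet> y"
  define w where "w = y - a *\<^sub>R x"
  have xw: "x \<bullet> w = 0" unfolding w_def a_def by (simp add: inner_diff_right xx)
  show ?thesis
  proof (cases "w = 0")
    case False
    define u where "u = w /\<^sub>R norm w"
    have nu: "norm u = 1" unfolding u_def using False by simp
    have xu: "x \<bullet> u = 0" unfolding u_def using xw by simp
    have wu: "norm w *\<^sub>R u = w" unfolding u_def using False by simp
    have yeq: "y = a *\<^sub>R x + norm w *\<^sub>R u" by (subst wu) (simp add: w_def)
    have "norm (a *\<^sub>R x + norm w *\<^sub>R u) ^ 2 = a^2 + (norm w)^2"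
    proof -
      have uu: "u \<bullet> u = 1" using nu by (simp add: dot_square_norm)
      have ux: "u \<bullet> x = 0" using xu by (simp add: inner_commute)
      have "(a *\<^sub>R x + norm w *\<^sub>R u) \<bullet> (a *\<^sub>R x + norm w *\<^sub>R u) = a^2 + (norm w)^2"
        by (simp add: inner_add_left inner_add_right uu ux xu xx power2_eq_square)
      then show ?thesis by (simp only: power2_norm_eq_inner)
    qed
    then have "a^2 + (norm w)^2 = 1" using yeq assms(3) by simp
    then show ?thesis by (rule that[OF nu xu _ yeq])
  next
    case True
    obtain v where v: "v \<noteq> 0" "orthogonal x v"
      using orthogonal_to_vector_exists[of x] assms(1) by auto
    define u where "u = v /\<^sub>R norm v"
    have nu: "norm u = 1" unfolding u_def using v by simp
    have xu: "x \<bullet> u = 0" unfolding u_def using v by (simp add: orthogonal_def)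
    have yeq: "y = a *\<^sub>R x + 0 *\<^sub>R u" using True unfolding w_def by simp
    have "\<bar>a\<bar> = 1" using yeq assms(2,3) by simp
    then have "\<bar>a\<bar>^2 = 1" by simp
    then have "a^2 + 0^2 = 1" by simp
    then show ?thesis by (rule that[OF nu xu _ yeq])
  qed
qed

lemma P_cont:
  assumes "poly_deg_lt r (P :: real^'n \<Rightarrow> real)"
  shows "continuous_on S P"
proof -
  obtain c :: "('n \<Rightarrow> nat) \<Rightarrow> real" where
    P: "\<forall>x. P x = (\<Sum>\<alpha>\<in>{\<alpha>. c \<alpha> \<noteq> 0}. c \<alpha> * (\<Prod>i\<in>UNIV. (x $ i) ^ \<alpha> i))"
    using assms unfolding poly_deg_lt_def by blast
  have "P = (\<lambda>x. \<Sum>\<alpha>\<in>{\<alpha>. c \<alpha> \<noteq> 0}. c \<alpha> * (\<Prod>i\<in>UNIV. (x $ i) ^ \<alpha> i))"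
    using P by auto
  moreover have "continuous_on S (\<lambda>x::real^'n. \<Sum>\<alpha>\<in>{\<alpha>. c \<alpha> \<noteq> 0}. c \<alpha> * (\<Prod>i\<in>UNIV. (x $ i) ^ \<alpha> i))"
    by (intro continuous_intros)
  ultimately show ?thesis by simp
qed

theorem lemma7p3:
  fixes P :: "real^'n \<Rightarrow> real" and x :: "real^'n" and r :: nat and \<delta> :: real
  assumes "CARD('n) \<ge> 2"
    and "r \<ge> 1"
    and "poly_deg_lt r P"
    and "x \<in> sphere 0 1"
    and "0 < \<delta>" and "\<delta> \<le> 2"
  shows "(SUP y\<in>sphere 0 1. \<bar>P y\<bar>) \<le> (4 / \<delta>) ^ (2 * r) * (SUP y\<in>sph_cap x \<delta>. \<bar>P y\<bar>)"
proof -
  note dim = assms(1) and r1 = assms(2) and Pp = assms(3) and dpos = assms(5) and d2 = assms(6)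
  have nx: "norm x = 1" using assms(4) by simp
  define n where "n = r - 1"
  have rn: "r = n + 1" unfolding n_def using r1 by simp
  define M where "M = (SUP y\<in>sph_cap x \<delta>. \<bar>P y\<bar>)"
  define Q where "Q = 16 / \<delta>^2"
  have capeq: "sph_cap x \<delta> = sphere 0 1 \<inter> cball x \<delta>"
    unfolding sph_cap_def by (auto simp: dist_norm)
  have cmp: "compact (sph_cap x \<delta>)" unfolding capeq
    by (intro compact_Int_closed) auto
  have contabs: "continuous_on (sph_cap x \<delta>) (\<lambda>y. \<bar>P y\<bar>)"
    by (intro continuous_intros P_cont[OF Pp])
  have bdd: "bdd_above ((\<lambda>y. \<bar>P y\<bar>) ` sph_cap x \<delta>)"
    by (intro bounded_imp_bdd_above compact_imp_bounded compact_continuous_image cmp contabs)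
  have xcap: "x \<in> sph_cap x \<delta>" unfolding sph_cap_def using nx dpos by simp
  have capM: "\<bar>P z\<bar> \<le> M" if "z \<in> sph_cap x \<delta>" for z
    unfolding M_def using bdd that by (rule cSUP_upper2) simp
  have M0: "M \<ge> 0" using capM[OF xcap] by simp
  have Q4: "Q \<ge> 4"
  proof -
    have "\<delta>^2 \<le> 2^2" using dpos d2 by (intro power_mono) auto
    then show ?thesis unfolding Q_def using dpos by (simp add: field_simps)
  qed
  have Cq: "(4 / \<delta>) ^ (2 * r) = Q ^ r"
    unfolding Q_def power_mult by (simp add: power_divide)
  have C1: "Q ^ r \<ge> 1" using Q4 by (intro one_le_power) simp
  have key: "\<bar>P y\<bar> \<le> Q ^ r * M" if y: "y \<in> sphere 0 1" for y
  proof -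
    have ny: "norm y = 1" using y by simp
    obtain u a b where nu: "norm u = 1" and xu: "x \<bullet> u = 0" and ab: "a^2 + b^2 = 1"
      and yeq: "y = a *\<^sub>R x + b *\<^sub>R u"
      using circ_decomp[OF dim nx ny] by blast
    define F where "F = (\<lambda>a b. P (a *\<^sub>R x + b *\<^sub>R u))"
    have "rep n F" unfolding F_def n_def by (rule P_rep[OF Pp])
    then obtain A B where hA: "degree A \<le> n" and hB: "degree (pCons 0 B) \<le> n"
      and Frep: "\<forall>a b. a^2 + b^2 = 1 \<longrightarrow> F a b = poly A a + b * poly B a"
      unfolding rep_def by blast
    define Sp where "Sp = A * A + [:1, 0, -1:] * (B * B)"
    have degS: "degree Sp \<le> 2 * n"
    proof -
      have "degree (A * A) \<le> 2 * n"
        using hA by (intro order.trans[OF degree_mult_le]) auto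
      moreover have "degree ([:1, 0, -1:] * (B * B)) \<le> 2 * n"
      proof (cases "B = 0")
        case True then show ?thesis by simp
      next
        case False
        then have "degree B + 1 \<le> n" using hB by simp
        moreover have "degree ([:1, 0, -1:] * (B * B)) \<le> 2 + (degree B + degree B)"
          by (intro order.trans[OF degree_mult_le] add_mono order.trans[OF degree_mult_le]) auto
        ultimately show ?thesis by linarith
      qed
      ultimately show ?thesis unfolding Sp_def by (intro degree_add_le)
    qed
    have sq: "F t s ^ 2 + F t (-s) ^ 2 = 2 * poly Sp t" if ts: "t^2 + s^2 = 1" for t s
    proof -
      have ts': "t^2 + (-s)^2 = 1" using ts by simp
      have ss: "s * s = 1 - t * t" using ts by (simp add: power2_eq_square algebra_simps)
      have "F t s ^ 2 + F t (-s) ^ 2 = (poly A t + s * poly B t)^2 + (poly A t - s * poly B t)^2"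
        using Frep ts ts' by simp
      also have "\<dots> = 2 * (poly A t * poly A t + (s * s) * (poly B t * poly B t))"
        by (simp add: power2_eq_square algebra_simps)
      also have "\<dots> = 2 * poly Sp t" unfolding ss Sp_def by (simp add: algebra_simps)
      finally show ?thesis .
    qed
    have onarc: "\<bar>poly Sp t\<bar> \<le> M^2" if t: "1 - \<delta>^2/2 \<le> t" "t \<le> 1" for t
    proof -
      have tm1: "t \<ge> -1"
      proof -
        have "\<delta>^2 \<le> 2^2" using dpos d2 by (intro power_mono) auto
        then have "\<delta>^2 \<le> 4" by simp
        then show ?thesis using t(1) by linarith
      qed
      define s where "s = sqrt (1 - t^2)"
      have "0 \<le> (1 - t) * (1 + t)" using t(2) tm1 by (intro mult_nonneg_nonneg) auto
      then have "t^2 \<le> 1" by (simp add: power2_eq_square ring_distribs)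
      then have ts: "t^2 + s^2 = 1" unfolding s_def by simp
      have ts': "t^2 + (-s)^2 = 1" using ts by simp
      have incap: "t *\<^sub>R x + s' *\<^sub>R u \<in> sph_cap x \<delta>" if s': "t^2 + s'^2 = 1" for s'
      proof -
        have "norm (x - (t *\<^sub>R x + s' *\<^sub>R u)) ^ 2 \<le> \<delta> ^ 2"
          using circ_facts(2)[OF nx nu xu s'] t(1) by linarith
        then have "norm (x - (t *\<^sub>R x + s' *\<^sub>R u)) \<le> \<delta>"
          by (rule power2_le_imp_le[OF _ less_imp_le[OF dpos]])
        then show ?thesis unfolding sph_cap_def using circ_facts(1)[OF nx nu xu s'] by simp
      qed
      have f1: "\<bar>F t s\<bar> \<le> M" unfolding F_def using capM[OF incap[OF ts]] .
      have f2: "\<bar>F t (-s)\<bar> \<le> M" unfolding F_def using capM[OF incap[OF ts']] .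
      have "F t s ^ 2 \<le> M^2" using power_mono[OF f1 abs_ge_zero, of 2] by simp
      moreover have "F t (-s) ^ 2 \<le> M^2" using power_mono[OF f2 abs_ge_zero, of 2] by simp
      ultimately have "2 * poly Sp t \<le> 2 * M^2" using sq[OF ts] by simp
      moreover have "0 \<le> 2 * poly Sp t"
        using sq[OF ts] zero_le_power2[of "F t s"] zero_le_power2[of "F t (-s)"] by linarith
      ultimately show ?thesis by simp
    qed
    show ?thesis
    proof (cases "a \<ge> 1 - \<delta>^2/2")
      case True
      have "norm (x - y) ^ 2 = 2 - 2 * a"
        unfolding yeq by (rule circ_facts(2)[OF nx nu xu ab])
      then have "norm (x - y) ^ 2 \<le> \<delta> ^ 2" using True by linarith
      then have "norm (x - y) \<le> \<delta>" by (rule power2_le_imp_le[OF _ less_imp_le[OF dpos]])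
      then have "y \<in> sph_cap x \<delta>" unfolding sph_cap_def using ny by simp
      then have "\<bar>P y\<bar> \<le> M" by (rule capM)
      also have "\<dots> \<le> Q ^ r * M" using C1 M0 by (simp add: mult_le_cancel_right1)
      finally show ?thesis .
    next
      case False
      define c where "c = 1 - \<delta>^2/4"
      define h where "h = \<delta>^2/4"
      have hpos: "h > 0" unfolding h_def using dpos by simp
      define q where "q = pcompose Sp [:c, -h:]"
      have degq: "degree q \<le> 2 * n"
        unfolding q_def using degS degree_pcompose_le[of Sp "[:c, -h:]"]
        by (auto intro: order.trans)
      have polyq: "poly q s = poly Sp (c - h * s)" for s
        unfolding q_def poly_pcompose by (simp add: algebra_simps)
      have qb: "\<bar>poly q s\<bar> \<le> M^2" if "-1 \<le> s" "s \<le> 1" for s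
      proof -
        have m1: "h * s \<le> h * 1" using that(2) hpos by (intro mult_left_mono) auto
        have m2: "h * (-1) \<le> h * s" using that(1) hpos by (intro mult_left_mono) auto
        have ch: "c - h = 1 - \<delta>^2/2" "c + h = 1" by (simp_all add: c_def h_def)
        have m1': "h * s \<le> h" using m1 by simp
        have m2': "- h \<le> h * s" using m2 by simp
        have a1: "1 - \<delta>^2/2 \<le> c - h * s" using m1' ch by linarith
        have a2: "c - h * s \<le> 1" using m2' ch by linarith
        show ?thesis unfolding polyq by (rule onarc[OF a1 a2])
      qed
      define s0 where "s0 = (c - a) / h"
      have a1: "a \<ge> -1"
      proof -
        have "a^2 \<le> 1" using ab by (metis le_add_same_cancel1 zero_le_power2)
        show ?thesis
        proof (rule ccontr)
          assume "\<not> a \<ge> -1"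
          then have "1 < (-a) * (-a)" by (intro less_1_mult) auto
          then show False using \<open>a^2 \<le> 1\<close> by (simp add: power2_eq_square)
        qed
      qed
      have "h \<le> c - a" using False unfolding c_def h_def by simp
      then have s01: "s0 \<ge> 1" unfolding s0_def using hpos by (simp add: le_divide_eq)
      have s0Q: "2 * s0 \<le> Q"
      proof -
        have "s0 \<le> (c + 1) / h" unfolding s0_def using a1 hpos by (intro divide_right_mono) auto
        also have "\<dots> = 8 / \<delta>^2 - 1" unfolding c_def h_def using dpos by (simp add: field_simps)
        finally show ?thesis unfolding Q_def by simp
      qed
      have "poly q s0 = poly Sp a" unfolding polyq s0_def using hpos by simp
      then have "\<bar>poly Sp a\<bar> \<le> M^2 * (2 * s0) ^ (2 * n)"
        using cheb_ineq[OF degq qb s01] by simp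
      also have "\<dots> \<le> M^2 * Q ^ (2 * n)"
        using s01 s0Q by (intro mult_left_mono power_mono) auto
      finally have Sa: "\<bar>poly Sp a\<bar> \<le> M^2 * Q ^ (2 * n)" .
      have "(P y)^2 = F a b ^ 2" unfolding F_def yeq ..
      also have "\<dots> \<le> F a b ^ 2 + F a (-b) ^ 2" by simp
      also have "\<dots> = 2 * poly Sp a" by (rule sq[OF ab])
      also have "\<dots> \<le> 2 * (M^2 * Q ^ (2 * n))" using Sa by simp
      also have "\<dots> \<le> Q^2 * (M^2 * Q ^ (2 * n))"
      proof (rule mult_right_mono)
        have "(4::real)^2 \<le> Q^2" using Q4 by (intro power_mono) auto
        then show "2 \<le> Q^2" by simp
      qed simp
      also have "\<dots> = (Q ^ r * M)^2"
      proof -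
        have e1: "(Q^(n+1))^2 = Q^((n+1)*2)" by (rule power_mult[symmetric])
        have e2: "(n+1)*2 = 2*n+2" by simp
        have e3: "Q^(2*n+2) = Q^2 * Q^(2*n)" by (subst power_add) (rule mult.commute)
        have "(Q ^ r * M)^2 = (Q^(n+1))^2 * M^2" unfolding rn by (rule power_mult_distrib)
        also have "\<dots> = Q^2 * Q^(2*n) * M^2" unfolding e1 e2 e3 ..
        finally show ?thesis by simp
      qed
      finally have "\<bar>P y\<bar>^2 \<le> (Q ^ r * M)^2" by simp
      moreover have "0 \<le> Q ^ r * M" using M0 Q4 by simp
      ultimately show ?thesis by (rule power2_le_imp_le)
    qed
  qed
  have "(SUP y\<in>sphere 0 1. \<bar>P y\<bar>) \<le> Q ^ r * M"
    using assms(4) key by (intro cSUP_least) auto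
  then show ?thesis unfolding Cq M_def .
qed

end
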